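(* Let $\chi\ge3$, let $s_1\ge s_2\ge\dots\ge s_\chi\ge0$, $\mathsf S=\mathrm{diag}(s_1,\dots,s_\chi)$, let $\mathcal N_L,\mathcal N_R$ be real numbers, $\mathbf p_R\in\mathbb C^{1\times\chi}$ a row vector and $\mathbf p_L\in\mathbb C^{\chi\times1}$ a column vector, and consider the $(\chi+2)\times(\chi+2)$ matrix $$M=\begin{pmatrix}\mathcal N_R&\mathbf p_R&0\\0&\mathsf S&\mathbf p_L\\0&0&\mathcal N_L\end{pmatrix}.$$ Denote the singular values of $M$ by $\lambda_{-1}\ge\lambda_0\ge\lambda_1\ge\dots\ge\lambda_\chi\ge0$. Then $s_a\ge\lambda_a\ge s_{a+2}$ for every $a\in\{1,\dots,\chi-2\}$. *)

theory Defs
  imports "Jordan_Normal_Form.Char_Poly" "HOL-Library.Multiset"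
begin

definition ctrans :: "complex mat \<Rightarrow> complex mat" where
  "ctrans A = mat (dim_col A) (dim_row A) (\<lambda>(i,j). cnj (A $$ (j,i)))"

definition sing_vals :: "complex mat \<Rightarrow> real list" where
  "sing_vals A = rev (sorted_list_of_multiset
      (image_mset (\<lambda>z. sqrt (Re z)) (proots (char_poly (ctrans A * A)))))"

(* the (chi+2)x(chi+2) matrix of the paper; rows/columns indexed 0..chi+1,
   s, pR, pL indexed 1..chi *)
definition Mmat :: "nat \<Rightarrow> (nat \<Rightarrow> real) \<Rightarrow> real \<Rightarrow> real \<Rightarrow> (nat \<Rightarrow> complex) \<Rightarrow> (nat \<Rightarrow> complex) \<Rightarrow> complex mat" where
  "Mmat chi s NR NL pR pL = mat (chi+2) (chi+2) (\<lambda>(i,j).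
     if i = 0 then (if j = 0 then complex_of_real NR else if j \<le> chi then pR j else 0)
     else if i \<le> chi then (if j = i then complex_of_real (s i) else if j = chi+1 then pL i else 0)
     else (if j = chi+1 then complex_of_real NL else 0))"

end

theory Submission
  imports Defs
begin


lemma LA:
  fixes g :: "nat \<Rightarrow> nat \<Rightarrow> complex"
  assumes "m < N"
  shows "\<exists>x. (\<exists>i<N. x i \<noteq> 0) \<and> (\<forall>l<m. (\<Sum>i<N. g l i * x i) = 0)"
proof -
  define A :: "complex mat" where "A = mat\<^sub>r N N (\<lambda>l. if l = N - 1 then 0\<^sub>v N else vec N (\<lambda>i. if l < m then g l i else 0))"
  have A: "A \<in> carrier_mat N N" unfolding A_def by auto
  have "det A = 0" unfolding A_def
    by (rule det_row_0, insert assms, auto)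
  then obtain v where v: "v \<in> carrier_vec N" "v \<noteq> 0\<^sub>v N" "A *\<^sub>v v = 0\<^sub>v N"
    using det_0_iff_vec_prod_zero_field[OF A] by auto
  show ?thesis
  proof (intro exI[of _ "\<lambda>i. v $ i"] conjI allI impI)
    show "\<exists>i<N. v $ i \<noteq> 0" using v by (metis carrier_vecD eq_vecI index_zero_vec(1) index_zero_vec(2))
  next
    fix l assume l: "l < m"
    have "(A *\<^sub>v v) $ l = 0" using v l assms by auto
    also have "(A *\<^sub>v v) $ l = row A l \<bullet> v" using A l assms by auto
    also have "row A l = vec N (\<lambda>i. g l i)" unfolding A_def using l assms by auto
    finally show "(\<Sum>i<N. g l i * v $ i) = 0" using v unfolding scalar_prod_def 
      by (auto simp: lessThan_atLeast0)
  qed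
qed



definition mvh :: "nat \<Rightarrow> (nat \<Rightarrow> nat \<Rightarrow> complex) \<Rightarrow> (nat \<Rightarrow> complex) \<Rightarrow> nat \<Rightarrow> complex" where
  "mvh n h x i = (\<Sum>j<n. h i j * x j)"
definition ipr :: "nat \<Rightarrow> (nat \<Rightarrow> complex) \<Rightarrow> (nat \<Rightarrow> complex) \<Rightarrow> complex" where
  "ipr n x y = (\<Sum>i<n. cnj (x i) * y i)"
definition herm :: "nat \<Rightarrow> (nat \<Rightarrow> nat \<Rightarrow> complex) \<Rightarrow> bool" where
  "herm n h = (\<forall>i<n. \<forall>j<n. h j i = cnj (h i j))"

lemma ipr_sym: "ipr n y x = cnj (ipr n x y)"
  unfolding ipr_def by (simp add: ac_simps)

lemma ipr_herm: assumes "herm n h" shows "ipr n x (mvh n h y) = ipr n (mvh n h x) y"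
proof -
  have "ipr n x (mvh n h y) = (\<Sum>i<n. \<Sum>j<n. cnj (x i) * h i j * y j)"
    unfolding ipr_def mvh_def by (simp add: sum_distrib_left mult.assoc)
  also have "\<dots> = (\<Sum>j<n. \<Sum>i<n. cnj (x i) * h i j * y j)" by (rule sum.swap)
  also have "\<dots> = (\<Sum>j<n. cnj (\<Sum>i<n. h j i * x i) * y j)"
  proof (rule sum.cong[OF refl])
    fix j assume j: "j \<in> {..<n}"
    have "cnj (\<Sum>i<n. h j i * x i) = (\<Sum>i<n. h i j * cnj (x i))"
      unfolding cnj_sum
    proof (rule sum.cong[OF refl])
      fix i assume i: "i \<in> {..<n}"
      have "h j i = cnj (h i j)" using assms i j unfolding herm_def by blast
      then show "cnj (h j i * x i) = h i j * cnj (x i)" by simp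
    qed
    then have "cnj (\<Sum>i<n. h j i * x i) * y j = (\<Sum>i<n. h i j * cnj (x i) * y j)"
      by (simp add: sum_distrib_right)
    also have "\<dots> = (\<Sum>i<n. cnj (x i) * h i j * y j)"
      by (rule sum.cong[OF refl], simp only: mult.commute[of "h _ j"])
    finally show "(\<Sum>i<n. cnj (x i) * h i j * y j) = cnj (\<Sum>i<n. h j i * x i) * y j" by simp
  qed
  also have "\<dots> = ipr n (mvh n h x) y" unfolding ipr_def mvh_def by simp
  finally show ?thesis .
qed

lemma ipr_self: "ipr n x x = of_real (\<Sum>i<n. (cmod (x i))^2)"
  unfolding ipr_def of_real_sum
  by (rule sum.cong[OF refl], simp only: mult.commute[of "cnj _"] complex_norm_square[symmetric])

lemma ipr_self_pos: fixes x :: "nat \<Rightarrow> complex" assumes "\<exists>i<n. x i \<noteq> 0" shows "(\<Sum>i<n. (cmod (x i))^2) > 0"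
proof -
  from assms obtain i where i: "i < n" "x i \<noteq> 0" by auto
  have "(cmod (x i))^2 \<le> (\<Sum>i<n. (cmod (x i))^2)"
    by (rule member_le_sum, insert i, auto)
  moreover have "(cmod (x i))^2 > 0" using i by auto
  ultimately show ?thesis by linarith
qed

lemma ipr_self_nz: fixes x :: "nat \<Rightarrow> complex" assumes "\<exists>i<n. x i \<noteq> 0" shows "ipr n x x \<noteq> 0"
  proof -
  have "(\<Sum>i<n. (cmod (x i))^2) \<noteq> 0" using ipr_self_pos[OF assms] by linarith
  then show ?thesis unfolding ipr_self by (simp only: of_real_eq_0_iff not_False_eq_True)
qed

lemma LA_set:
  fixes G :: "(nat \<Rightarrow> complex) set"
  assumes "finite G" "card G < N"
  shows "\<exists>x. (\<exists>i<N. x i \<noteq> 0) \<and> (\<forall>g\<in>G. (\<Sum>i<N. g i * x i) = 0)"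
proof -
  obtain gs where gs: "set gs = G" "distinct gs" using assms finite_distinct_list by blast
  hence len: "length gs < N" using assms distinct_card[OF gs(2)] gs(1) by simp
  from LA[OF len, of "\<lambda>l. gs ! l"] obtain x where x: "\<exists>i<N. x i \<noteq> 0"
    "\<forall>l<length gs. (\<Sum>i<N. (gs ! l) i * x i) = 0" by auto
  show ?thesis
  proof (intro exI[of _ x] conjI x(1) ballI)
    fix g assume "g \<in> G"
    then obtain l where "l < length gs" "g = gs ! l" using gs(1) by (auto simp: in_set_conv_nth)
    then show "(\<Sum>i<N. g i * x i) = 0" using x(2) by auto
  qed
qed



fun pw :: "nat \<Rightarrow> (nat \<Rightarrow> nat \<Rightarrow> complex) \<Rightarrow> (nat \<Rightarrow> complex) \<Rightarrow> nat \<Rightarrow> nat \<Rightarrow> complex" where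
  "pw n h x 0 = x"
| "pw n h x (Suc j) = mvh n h (pw n h x j)"

lemma mvh_lincomb: "mvh n h (\<lambda>i. \<Sum>j<N. b j * v j i) i = (\<Sum>j<N. b j * mvh n h (v j) i)"
proof -
  have "mvh n h (\<lambda>i. \<Sum>j<N. b j * v j i) i = (\<Sum>l<n. \<Sum>j<N. b j * (h i l * v j l))"
    unfolding mvh_def by (simp add: sum_distrib_left mult.left_commute)
  also have "\<dots> = (\<Sum>j<N. \<Sum>l<n. b j * (h i l * v j l))" by (rule sum.swap)
  also have "\<dots> = (\<Sum>j<N. b j * mvh n h (v j) i)"
    unfolding mvh_def by (simp add: sum_distrib_left)
  finally show ?thesis .
qed

lemma ipr_lincomb: "ipr n u (\<lambda>i. \<Sum>j<N. b j * v j i) = (\<Sum>j<N. b j * ipr n u (v j))"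
proof -
  have "ipr n u (\<lambda>i. \<Sum>j<N. b j * v j i) = (\<Sum>l<n. \<Sum>j<N. b j * (cnj (u l) * v j l))"
    unfolding ipr_def by (simp add: sum_distrib_left mult.left_commute)
  also have "\<dots> = (\<Sum>j<N. \<Sum>l<n. b j * (cnj (u l) * v j l))" by (rule sum.swap)
  also have "\<dots> = (\<Sum>j<N. b j * ipr n u (v j))"
    unfolding ipr_def by (simp add: sum_distrib_left)
  finally show ?thesis .
qed

lemma ipr_cong2: "(\<And>i. i < n \<Longrightarrow> f i = g i) \<Longrightarrow> ipr n x f = ipr n x g"
  unfolding ipr_def by (auto intro!: sum.cong)
lemma ipr_cong1: "(\<And>i. i < n \<Longrightarrow> f i = g i) \<Longrightarrow> ipr n f x = ipr n g x"
  unfolding ipr_def by (auto intro!: sum.cong)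
lemma ipr_smult2: "ipr n x (\<lambda>i. c * y i) = c * ipr n x y"
  unfolding ipr_def by (simp add: sum_distrib_left mult.left_commute)
lemma ipr_smult1: "ipr n (\<lambda>i. c * x i) y = cnj c * ipr n x y"
  unfolding ipr_def by (simp add: sum_distrib_left mult.assoc)

lemma krylov:
  fixes h :: "nat \<Rightarrow> nat \<Rightarrow> complex" and x :: "nat \<Rightarrow> complex" and q :: "complex poly"
  assumes x0: "\<exists>i<n. x i \<noteq> 0"
  shows "q \<noteq> 0 \<Longrightarrow> degree q < N \<Longrightarrow> (\<forall>i<n. (\<Sum>j<N. coeff q j * pw n h x j i) = 0) \<Longrightarrow>
    \<exists>b e. (\<exists>i<n. (\<Sum>j<N. b j * pw n h x j i) \<noteq> 0) \<and>
      (\<forall>i<n. mvh n h (\<lambda>i. \<Sum>j<N. b j * pw n h x j i) i = e * (\<Sum>j<N. b j * pw n h x j i))"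
proof (induction "degree q" arbitrary: q rule: less_induct)
  case (less q)
  obtain N' where N: "N = Suc N'" using less.prems(2) by (cases N, auto)
  show ?case
  proof (cases "degree q = 0")
    case True
    then obtain c where q: "q = [:c:]" by (rule degree_eq_zeroE)
    with less.prems have c: "c \<noteq> 0" by auto
    from x0 obtain i where i: "i < n" "x i \<noteq> 0" by auto
    have "(\<Sum>j<N. coeff q j * pw n h x j i) = c * x i"
      unfolding N sum.lessThan_Suc_shift by (simp add: q)
    with less.prems(3) i c show ?thesis by auto
  next
    case False
    hence "\<not> constant (poly q)" by (simp add: constant_degree)
    then obtain r where "poly q r = 0" using fundamental_theorem_of_algebra by blast
    then obtain q' where q: "q = [:-r,1:] * q'" using poly_eq_0_iff_dvd by (metis dvdE)
    have q'0: "q' \<noteq> 0" using less.prems(1) q by auto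
    have dq: "degree q = Suc (degree q')" unfolding q
      by (subst degree_mult_eq, insert q'0, auto)
    have dq': "degree q' < N'" using dq less.prems(2) N by auto
    define y where "y = (\<lambda>i. \<Sum>j<N. coeff q' j * pw n h x j i)"
    have coeffq: "coeff q j = coeff (pCons 0 q') j - r * coeff q' j" for j
      unfolding q by simp
    have key: "(\<Sum>j<N. coeff q j * pw n h x j i) = mvh n h y i - r * y i" for i
    proof -
      have "(\<Sum>j<N. coeff q j * pw n h x j i) =
        (\<Sum>j<N. coeff (pCons 0 q') j * pw n h x j i) - r * y i"
        unfolding coeffq y_def by (simp add: algebra_simps sum_subtractf sum_distrib_left)
      also have "(\<Sum>j<N. coeff (pCons 0 q') j * pw n h x j i) = (\<Sum>j<N'. coeff q' j * pw n h x (Suc j) i)"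
        unfolding N sum.lessThan_Suc_shift by simp
      also have "\<dots> = (\<Sum>j<N. coeff q' j * pw n h x (Suc j) i)"
        unfolding N sum.lessThan_Suc using dq' by (simp add: coeff_eq_0)
      also have "\<dots> = mvh n h y i"
        unfolding y_def mvh_lincomb by simp
      finally show ?thesis .
    qed
    show ?thesis
    proof (cases "\<exists>i<n. y i \<noteq> 0")
      case True
      show ?thesis
      proof (intro exI[of _ "coeff q'"] exI[of _ r] conjI)
        show "\<exists>i<n. (\<Sum>j<N. coeff q' j * pw n h x j i) \<noteq> 0" using True unfolding y_def .
        show "\<forall>i<n. mvh n h (\<lambda>i. \<Sum>j<N. coeff q' j * pw n h x j i) i = r * (\<Sum>j<N. coeff q' j * pw n h x j i)"
          using key less.prems(3) unfolding y_def by auto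
      qed
    next
      case False
      show ?thesis
        by (rule less.hyps[of q'], insert dq q'0 dq' N False, auto simp: y_def)
    qed
  qed
qed

lemma eig_in_W:
  fixes h :: "nat \<Rightarrow> nat \<Rightarrow> complex" and v :: "nat \<Rightarrow> nat \<Rightarrow> complex"
  assumes H: "herm n h" and ev: "\<And>l i. l < k \<Longrightarrow> i < n \<Longrightarrow> mvh n h (v l) i = e l * v l i"
    and k: "k < n"
  shows "\<exists>y c. (\<exists>i<n. y i \<noteq> 0) \<and> (\<forall>i<n. mvh n h y i = c * y i) \<and> (\<forall>l<k. ipr n (v l) y = 0)"
proof -
  from LA[OF k, of "\<lambda>l i. cnj (v l i)"] obtain x where x0: "\<exists>i<n. x i \<noteq> 0"
    and xW: "\<forall>l<k. (\<Sum>i<n. cnj (v l i) * x i) = 0" by auto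
  have pwW: "ipr n (v l) (pw n h x j) = 0" if l: "l < k" for l j
  proof (induction j)
    case 0 then show ?case using xW l unfolding ipr_def by auto
  next
    case (Suc j)
    have "ipr n (v l) (pw n h x (Suc j)) = ipr n (mvh n h (v l)) (pw n h x j)"
      using ipr_herm[OF H] by simp
    also have "\<dots> = ipr n (\<lambda>i. e l * v l i) (pw n h x j)"
      by (rule ipr_cong1, insert ev l, auto)
    also have "\<dots> = 0" unfolding ipr_smult1 Suc by simp
    finally show ?case .
  qed
  have n1: "n < Suc n" by simp
  from LA[OF n1, of "\<lambda>i j. pw n h x j i"] obtain a where a0: "\<exists>j<Suc n. a j \<noteq> 0"
    and arel: "\<forall>i<n. (\<Sum>j<Suc n. pw n h x j i * a j) = 0" by auto
  define q where "q = Poly (map a [0..<Suc n])"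
  have cq: "coeff q j = (if j < Suc n then a j else 0)" for j
    unfolding q_def by (auto simp: nth_default_def simp del: upt_Suc)
  have q0: "q \<noteq> 0" using a0 cq by (metis coeff_0)
  have dq: "degree q < Suc n"
    using degree_le[of n q] cq by auto
  have rel: "\<forall>i<n. (\<Sum>j<Suc n. coeff q j * pw n h x j i) = 0"
    using arel by (simp add: cq mult.commute)
  from krylov[OF x0 q0 dq rel] obtain b c where
    nz: "\<exists>i<n. (\<Sum>j<Suc n. b j * pw n h x j i) \<noteq> 0" and
    eig: "\<forall>i<n. mvh n h (\<lambda>i. \<Sum>j<Suc n. b j * pw n h x j i) i = c * (\<Sum>j<Suc n. b j * pw n h x j i)"
    by blast
  show ?thesis
  proof (intro exI[of _ "\<lambda>i. \<Sum>j<Suc n. b j * pw n h x j i"] exI[of _ c] conjI allI impI)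
    show "\<exists>i<n. (\<Sum>j<Suc n. b j * pw n h x j i) \<noteq> 0" by fact
    fix i assume "i < n" then show "mvh n h (\<lambda>i. \<Sum>j<Suc n. b j * pw n h x j i) i = c * (\<Sum>j<Suc n. b j * pw n h x j i)"
      using eig by auto
  next
    fix l assume "l < k" then show "ipr n (v l) (\<lambda>i. \<Sum>j<Suc n. b j * pw n h x j i) = 0"
      unfolding ipr_lincomb using pwW by simp
  qed
qed

lemma eigval_real:
  fixes h :: "nat \<Rightarrow> nat \<Rightarrow> complex"
  assumes H: "herm n h" and nz: "\<exists>i<n. y i \<noteq> 0" and ev: "\<forall>i<n. mvh n h y i = c * y i"
  shows "c = of_real (Re c)"
proof -
  have "ipr n y (mvh n h y) = ipr n y (\<lambda>i. c * y i)" by (rule ipr_cong2, insert ev, auto)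
  also have "\<dots> = c * ipr n y y" by (rule ipr_smult2)
  finally have 1: "ipr n y (mvh n h y) = c * ipr n y y" .
  have "ipr n (mvh n h y) y = ipr n (\<lambda>i. c * y i) y" by (rule ipr_cong1, insert ev, auto)
  also have "\<dots> = cnj c * ipr n y y" by (rule ipr_smult1)
  finally have 2: "ipr n (mvh n h y) y = cnj c * ipr n y y" .
  have "c * ipr n y y = cnj c * ipr n y y" by (metis 1 2 ipr_herm[OF H])
  with ipr_self_nz[OF nz] have "c = cnj c" by (metis mult_right_cancel)
  then show ?thesis by (metis Reals_cnj_iff complex_is_Real_iff of_real_Re)
qed

lemma spectral_k:
  fixes h :: "nat \<Rightarrow> nat \<Rightarrow> complex"
  assumes H: "herm n h"
  shows "k \<le> n \<Longrightarrow> \<exists>u d. (\<forall>l<k. (\<exists>i<n. u l i \<noteq> 0) \<and> (\<forall>i<n. mvh n h (u l) i = of_real (d l) * u l i))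
     \<and> (\<forall>l<k. \<forall>l'<k. l \<noteq> l' \<longrightarrow> ipr n (u l) (u l') = 0)"
proof (induction k)
  case 0 then show ?case by auto
next
  case (Suc k)
  then obtain u d where u: "\<forall>l<k. (\<exists>i<n. u l i \<noteq> 0) \<and> (\<forall>i<n. mvh n h (u l) i = of_real (d l) * u l i)"
    and orth: "\<forall>l<k. \<forall>l'<k. l \<noteq> l' \<longrightarrow> ipr n (u l) (u l') = 0" by auto
  have k: "k < n" using Suc by auto
  from eig_in_W[OF H _ k, of u "\<lambda>l. of_real (d l)"] u obtain y c where
    y: "\<exists>i<n. y i \<noteq> 0" "\<forall>i<n. mvh n h y i = c * y i" "\<forall>l<k. ipr n (u l) y = 0" by blast
  have c: "c = of_real (Re c)" by (rule eigval_real[OF H y(1) y(2)])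
  define u' where "u' = u(k := y)"
  define d' where "d' = d(k := Re c)"
  show ?case
  proof (intro exI[of _ u'] exI[of _ d'] conjI allI impI)
    fix l assume l: "l < Suc k"
    show "\<exists>i<n. u' l i \<noteq> 0" using l u y unfolding u'_def by (cases "l = k", auto)
  next
    fix l i assume l: "l < Suc k" and i: "i < n"
    show "mvh n h (u' l) i = of_real (d' l) * u' l i" using l i u y c unfolding u'_def d'_def
      by (cases "l = k", auto)
  next
    fix l l' assume l: "l < Suc k" and l': "l' < Suc k" and ll: "l \<noteq> l'"
    show "ipr n (u' l) (u' l') = 0"
    proof (cases "l = k")
      case True
      with ll l' have "l' < k" by auto
      then have "ipr n (u' l') (u' l) = 0" using y True ll unfolding u'_def by auto
      then show ?thesis by (subst ipr_sym, simp)
    next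
      case False
      show ?thesis
      proof (cases "l' = k")
        case True
        then show ?thesis using y False l unfolding u'_def by auto
      next
        case False2: False
        then show ?thesis using orth False l l' ll unfolding u'_def by auto
      qed
    qed
  qed
qed



lemma mult_entry:
  assumes "A \<in> carrier_mat nr n" "B \<in> carrier_mat n nc" "i < nr" "j < nc"
  shows "(A * B) $$ (i,j) = (\<Sum>k<n. A $$ (i,k) * B $$ (k,j))"
  using assms by (auto simp: scalar_prod_def lessThan_atLeast0 intro!: sum.cong)

lemma ctrans_carrier: "A \<in> carrier_mat n n \<Longrightarrow> ctrans A \<in> carrier_mat n n"
  unfolding ctrans_def by auto

lemma ctrans_entry: "A \<in> carrier_mat n n \<Longrightarrow> i < n \<Longrightarrow> j < n \<Longrightarrow> ctrans A $$ (i,j) = cnj (A $$ (j,i))"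
  unfolding ctrans_def by auto

lemma gram_entry:
  assumes A: "A \<in> carrier_mat n n" and i: "i < n" and j: "j < n"
  shows "(ctrans A * A) $$ (i,j) = (\<Sum>r<n. cnj (A $$ (r,i)) * A $$ (r,j))"
  by (subst mult_entry[OF ctrans_carrier[OF A] A i j], rule sum.cong, insert A i j, auto simp: ctrans_entry)

lemma gram_herm:
  assumes A: "A \<in> carrier_mat n n"
  shows "herm n (\<lambda>i j. (ctrans A * A) $$ (i,j))"
  unfolding herm_def using A by (auto simp: gram_entry cnj_sum mult.commute intro!: sum.cong)

lemma gram_form:
  assumes A: "A \<in> carrier_mat n n"
  shows "ipr n x (mvh n (\<lambda>i j. (ctrans A * A) $$ (i,j)) x) = of_real (\<Sum>r<n. (cmod (\<Sum>j<n. A $$ (r,j) * x j))^2)"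
proof -
  let ?y = "\<lambda>r. \<Sum>j<n. A $$ (r,j) * x j"
  have "ipr n x (mvh n (\<lambda>i j. (ctrans A * A) $$ (i,j)) x) = (\<Sum>i<n. \<Sum>j<n. \<Sum>r<n. cnj (x i) * (cnj (A $$ (r,i)) * A $$ (r,j) * x j))"
    unfolding ipr_def mvh_def using A by (auto simp: gram_entry sum_distrib_left sum_distrib_right intro!: sum.cong)
  also have "\<dots> = (\<Sum>i<n. \<Sum>r<n. \<Sum>j<n. cnj (x i) * (cnj (A $$ (r,i)) * A $$ (r,j) * x j))"
    by (rule sum.cong[OF refl], rule sum.swap)
  also have "\<dots> = (\<Sum>r<n. \<Sum>i<n. \<Sum>j<n. cnj (x i) * (cnj (A $$ (r,i)) * A $$ (r,j) * x j))"
    by (rule sum.swap)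
  also have "\<dots> = (\<Sum>r<n. cnj (?y r) * ?y r)"
    by (auto simp: cnj_sum sum_distrib_left sum_distrib_right mult_ac intro!: sum.cong)
  also have "\<dots> = ipr n ?y ?y" unfolding ipr_def by simp
  also have "\<dots> = of_real (\<Sum>r<n. (cmod (?y r))^2)" by (rule ipr_self)
  finally show ?thesis .
qed

lemma proots_linprod: "proots (\<Prod>a\<leftarrow>xs. [:- a, 1:]) = mset (xs :: complex list)"
proof (induction xs)
  case Nil then show ?case by simp
next
  case (Cons a xs)
  have nz: "(\<Prod>a\<leftarrow>xs. [:- a, 1:]) \<noteq> 0" by (auto simp: prod_list_zero_iff)
  have e: "(\<Prod>a\<leftarrow>a # xs. [:- a, 1:]) = [:- a, 1:] * (\<Prod>a\<leftarrow>xs. [:- a, 1:])" by simp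
  have "proots (\<Prod>a\<leftarrow>a # xs. [:- a, 1:]) = proots [:- a, 1:] + proots (\<Prod>a\<leftarrow>xs. [:- a, 1:])"
    unfolding e by (rule proots_mult, auto simp: nz)
  then show ?case using Cons by simp
qed

lemma sing_vals_spectral:
  assumes A: "A \<in> carrier_mat n n"
  defines "h \<equiv> \<lambda>i j. (ctrans A * A) $$ (i,j)"
  shows "\<exists>u d. (\<forall>l<n. (\<exists>i<n. u l i \<noteq> 0) \<and> (\<forall>i<n. mvh n h (u l) i = of_real (d l) * u l i))
     \<and> (\<forall>l<n. \<forall>l'<n. l \<noteq> l' \<longrightarrow> ipr n (u l) (u l') = 0)
     \<and> sing_vals A = rev (sort (map (\<lambda>k. sqrt (d k)) [0..<n]))"
proof -
  from spectral_k[OF gram_herm[OF A], of n, folded h_def] obtain u d where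
    u: "\<forall>l<n. (\<exists>i<n. u l i \<noteq> 0) \<and> (\<forall>i<n. mvh n h (u l) i = of_real (d l) * u l i)"
    and orth: "\<forall>l<n. \<forall>l'<n. l \<noteq> l' \<longrightarrow> ipr n (u l) (u l') = 0" by auto
  define H where "H = ctrans A * A"
  have H: "H \<in> carrier_mat n n" unfolding H_def using A ctrans_carrier[OF A] by auto
  define U where "U = mat n n (\<lambda>(i,k). u k i)"
  define D where "D = mat n n (\<lambda>(i,j). if i = j then complex_of_real (d i) else 0)"
  define Q where "Q = mat n n (\<lambda>(k,i). cnj (u k i) / ipr n (u k) (u k))"
  have U: "U \<in> carrier_mat n n" and D: "D \<in> carrier_mat n n" and Q: "Q \<in> carrier_mat n n"
    unfolding U_def D_def Q_def by auto
  have nz: "ipr n (u k) (u k) \<noteq> 0" if "k < n" for k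
    using ipr_self_nz u that by blast
  have QU: "Q * U = 1\<^sub>m n"
  proof (rule eq_matI)
    fix k l assume k: "k < dim_row (1\<^sub>m n)" and l: "l < dim_col (1\<^sub>m n)"
    hence k: "k < n" and l: "l < n" by auto
    have "(Q * U) $$ (k,l) = (\<Sum>i<n. cnj (u k i) / ipr n (u k) (u k) * u l i)"
      by (subst mult_entry[OF Q U k l], rule sum.cong, insert k l, auto simp: Q_def U_def)
    also have "\<dots> = ipr n (u k) (u l) / ipr n (u k) (u k)"
      unfolding ipr_def by (simp add: sum_divide_distrib)
    also have "\<dots> = 1\<^sub>m n $$ (k,l)" using k l nz[OF k] orth by auto
    finally show "(Q * U) $$ (k,l) = 1\<^sub>m n $$ (k,l)" .
  qed (insert Q U, auto)
  have UQ: "U * Q = 1\<^sub>m n" by (rule mat_mult_left_right_inverse[OF Q U QU])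
  have HU: "H * U = U * D"
  proof (rule eq_matI)
    fix i k assume i: "i < dim_row (U * D)" and k: "k < dim_col (U * D)"
    hence i: "i < n" and k: "k < n" using U D by auto
    have "(H * U) $$ (i,k) = mvh n h (u k) i"
      by (subst mult_entry[OF H U i k], unfold mvh_def h_def H_def, rule sum.cong, insert i k, auto simp: U_def)
    also have "\<dots> = of_real (d k) * u k i" using u i k by auto
    also have "\<dots> = (\<Sum>j<n. U $$ (i,j) * D $$ (j,k))"
      using i k by (simp add: U_def D_def if_distrib[of "\<lambda>x. _ * x"] sum.delta' cong: if_cong)
    also have "\<dots> = (U * D) $$ (i,k)" by (subst mult_entry[OF U D i k], simp)
    finally show "(H * U) $$ (i,k) = (U * D) $$ (i,k)" .
  qed (insert H U D, auto)
  have HUDQ: "H = U * D * Q"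
  proof -
    have "H = H * (U * Q)" using H UQ by simp
    also have "\<dots> = (H * U) * Q" using H U Q by simp
    finally show ?thesis unfolding HU .
  qed
  have "similar_mat_wit H D U Q"
    unfolding similar_mat_wit_def Let_def using H U D Q UQ QU HUDQ by auto
  hence "similar_mat H D" unfolding similar_mat_def by blast
  hence "char_poly H = char_poly D" by (rule char_poly_similar)
  also have "\<dots> = (\<Prod>a\<leftarrow>diag_mat D. [:- a, 1:])"
    by (rule char_poly_upper_triangular[OF D], auto simp: upper_triangular_def D_def)
  also have "diag_mat D = map (\<lambda>i. complex_of_real (d i)) [0..<n]"
    unfolding diag_mat_def D_def by auto
  finally have cp: "char_poly H = (\<Prod>a\<leftarrow>map (\<lambda>i. complex_of_real (d i)) [0..<n]. [:- a, 1:])" .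
  have "sing_vals A = rev (sort (map (\<lambda>k. sqrt (d k)) [0..<n]))"
    unfolding sing_vals_def H_def[symmetric] cp
    unfolding proots_linprod 
    unfolding mset_map[symmetric] map_map sorted_list_of_multiset_mset
    by (simp only: o_def Re_complex_of_real)
  with u orth show ?thesis by blast
qed



lemma ipr_lincomb1: "ipr n (\<lambda>i. \<Sum>j<N. b j * v j i) y = (\<Sum>j<N. cnj (b j) * ipr n (v j) y)"
proof -
  have "ipr n (\<lambda>i. \<Sum>j<N. b j * v j i) y = cnj (ipr n y (\<lambda>i. \<Sum>j<N. b j * v j i))" by (rule ipr_sym)
  also have "\<dots> = (\<Sum>j<N. cnj (b j) * ipr n (v j) y)" unfolding ipr_lincomb cnj_sum
    by (simp add: ipr_sym[of n y])
  finally show ?thesis .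
qed

lemma ipr_orth_comb:
  assumes orth: "\<forall>l<n. \<forall>l'<n. l \<noteq> l' \<longrightarrow> ipr n (u l) (u l') = 0"
  shows "ipr n (\<lambda>i. \<Sum>k<n. a k * u k i) (\<lambda>i. \<Sum>k<n. b k * u k i) = (\<Sum>k<n. cnj (a k) * b k * ipr n (u k) (u k))"
proof -
  have "ipr n (\<lambda>i. \<Sum>k<n. a k * u k i) (\<lambda>i. \<Sum>k<n. b k * u k i) = (\<Sum>k<n. cnj (a k) * (\<Sum>l<n. b l * ipr n (u k) (u l)))"
    unfolding ipr_lincomb1 ipr_lincomb ..
  also have "\<dots> = (\<Sum>k<n. cnj (a k) * (b k * ipr n (u k) (u k)))"
  proof (rule sum.cong[OF refl])
    fix k assume k: "k \<in> {..<n}"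
    have "(\<Sum>l<n. b l * ipr n (u k) (u l)) = (\<Sum>l<n. if l = k then b k * ipr n (u k) (u k) else 0)"
      by (rule sum.cong, insert orth k, auto)
    also have "\<dots> = b k * ipr n (u k) (u k)" using k by simp
    finally show "cnj (a k) * (\<Sum>l<n. b l * ipr n (u k) (u l)) = cnj (a k) * (b k * ipr n (u k) (u k))" by simp
  qed
  finally show ?thesis by (simp add: mult.assoc)
qed

locale eigdata =
  fixes n :: nat and h :: "nat \<Rightarrow> nat \<Rightarrow> complex" and u :: "nat \<Rightarrow> nat \<Rightarrow> complex" and d :: "nat \<Rightarrow> real"
  assumes nz: "\<And>l. l < n \<Longrightarrow> \<exists>i<n. u l i \<noteq> 0"
    and ev: "\<And>l i. l < n \<Longrightarrow> i < n \<Longrightarrow> mvh n h (u l) i = of_real (d l) * u l i"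
    and orth: "\<forall>l<n. \<forall>l'<n. l \<noteq> l' \<longrightarrow> ipr n (u l) (u l') = 0"
begin

definition dl where "dl k = (\<Sum>i<n. (cmod (u k i))^2)"

lemma dl_pos: "k < n \<Longrightarrow> dl k > 0" unfolding dl_def using ipr_self_pos nz by blast

lemma ipr_uu: "ipr n (u k) (u k) = of_real (dl k)" unfolding dl_def by (rule ipr_self)

lemma forms:
  fixes c :: "nat \<Rightarrow> complex"
  defines "x \<equiv> \<lambda>i. \<Sum>k<n. c k * u k i"
  shows "Re (ipr n x x) = (\<Sum>k<n. (cmod (c k))^2 * dl k)"
    and "Re (ipr n x (mvh n h x)) = (\<Sum>k<n. d k * ((cmod (c k))^2 * dl k))"
proof -
  have cc: "cnj z * z = of_real ((cmod z)^2)" for z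
    by (metis complex_norm_square mult.commute)
  have "ipr n x x = (\<Sum>k<n. cnj (c k) * c k * ipr n (u k) (u k))"
    unfolding x_def by (rule ipr_orth_comb[OF orth])
  also have "\<dots> = of_real (\<Sum>k<n. (cmod (c k))^2 * dl k)"
    unfolding of_real_sum by (rule sum.cong[OF refl], simp only: cc ipr_uu of_real_mult)
  finally show "Re (ipr n x x) = (\<Sum>k<n. (cmod (c k))^2 * dl k)" by simp
  have "ipr n x (mvh n h x) = ipr n x (\<lambda>i. \<Sum>k<n. (c k * of_real (d k)) * u k i)"
  proof (rule ipr_cong2)
    fix i assume i: "i < n"
    have "mvh n h x i = (\<Sum>k<n. c k * mvh n h (u k) i)" unfolding x_def by (rule mvh_lincomb)
    also have "\<dots> = (\<Sum>k<n. (c k * of_real (d k)) * u k i)" by (rule sum.cong, insert ev i, auto)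
    finally show "mvh n h x i = (\<Sum>k<n. (c k * of_real (d k)) * u k i)" .
  qed
  also have "\<dots> = (\<Sum>k<n. cnj (c k) * (c k * of_real (d k)) * ipr n (u k) (u k))"
    unfolding x_def by (rule ipr_orth_comb[OF orth])
  also have "\<dots> = of_real (\<Sum>k<n. d k * ((cmod (c k))^2 * dl k))"
    unfolding of_real_sum
  proof (rule sum.cong[OF refl])
    fix k
    have "cnj (c k) * (c k * of_real (d k)) * ipr n (u k) (u k) = (cnj (c k) * c k) * of_real (d k) * ipr n (u k) (u k)"
      by (simp only: mult_ac)
    also have "\<dots> = of_real (d k * ((cmod (c k))^2 * dl k))" by (simp only: cc ipr_uu of_real_mult, simp only: mult_ac)
    finally show "cnj (c k) * (c k * of_real (d k)) * ipr n (u k) (u k) = of_real (d k * ((cmod (c k))^2 * dl k))" .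
  qed
  finally show "Re (ipr n x (mvh n h x)) = (\<Sum>k<n. d k * ((cmod (c k))^2 * dl k))" by simp
qed

lemma find_comb:
  fixes g :: "nat \<Rightarrow> nat \<Rightarrow> complex"
  assumes K: "K \<subseteq> {..<n}" and card: "m + card K < n"
  shows "\<exists>c. (\<exists>k<n. c k \<noteq> 0) \<and> (\<forall>k\<in>K. c k = 0) \<and>
     (\<forall>l<m. (\<Sum>i<n. g l i * (\<Sum>k<n. c k * u k i)) = 0)"
proof -
  define G where "G = (\<lambda>l k. \<Sum>i<n. g l i * u k i) ` {..<m} \<union> (\<lambda>k' k. if k = k' then 1 else 0) ` K"
  have finK: "finite K" using K finite_subset by blast
  have "card G \<le> card ((\<lambda>l k. \<Sum>i<n. g l i * u k i) ` {..<m}) + card ((\<lambda>k' k. if k = k' then (1::complex) else 0) ` K)"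
    unfolding G_def by (rule card_Un_le)
  also have "\<dots> \<le> m + card K" by (intro add_mono card_image_le[THEN order.trans], auto simp: finK)
  finally have cG: "card G < n" using card by linarith
  have fG: "finite G" unfolding G_def using finK by auto
  from LA_set[OF fG cG] obtain c where c0: "\<exists>k<n. c k \<noteq> 0" and cG: "\<forall>g\<in>G. (\<Sum>k<n. g k * c k) = 0" by auto
  show ?thesis
  proof (intro exI[of _ c] conjI c0 ballI allI impI)
    fix k' assume k': "k' \<in> K"
    hence "(\<lambda>k. if k = k' then 1 else 0) \<in> G" unfolding G_def by auto
    with cG have "(\<Sum>k<n. (if k = k' then 1 else 0) * c k) = 0" by auto
    moreover have "k' < n" using k' K by auto
    moreover have "(\<Sum>k<n. (if k = k' then 1 else 0) * c k) = (\<Sum>k<n. if k = k' then c k else 0)"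
      by (rule sum.cong, auto)
    ultimately show "c k' = 0" by simp
  next
    fix l assume l: "l < m"
    hence "(\<lambda>k. \<Sum>i<n. g l i * u k i) \<in> G" unfolding G_def by auto
    with cG have "(\<Sum>k<n. (\<Sum>i<n. g l i * u k i) * c k) = 0" by auto
    also have "(\<Sum>k<n. (\<Sum>i<n. g l i * u k i) * c k) = (\<Sum>k<n. \<Sum>i<n. g l i * (c k * u k i))"
      by (rule sum.cong[OF refl], simp add: sum_distrib_right sum_distrib_left mult_ac)
    also have "\<dots> = (\<Sum>i<n. \<Sum>k<n. g l i * (c k * u k i))" by (rule sum.swap)
    also have "\<dots> = (\<Sum>i<n. g l i * (\<Sum>k<n. c k * u k i))" by (simp add: sum_distrib_left)
    finally show "(\<Sum>i<n. g l i * (\<Sum>k<n. c k * u k i)) = 0" .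
  qed
qed

lemma quad_lower:
  fixes g :: "nat \<Rightarrow> nat \<Rightarrow> complex"
  assumes card: "m + card {k. k < n \<and> d k \<ge> t} < n"
    and hyp: "\<And>x. (\<forall>l<m. (\<Sum>i<n. g l i * x i) = 0) \<Longrightarrow> t * Re (ipr n x x) \<le> Re (ipr n x (mvh n h x))"
  shows False
proof -
  from find_comb[of "{k. k < n \<and> d k \<ge> t}" m g] card obtain c where
    c0: "\<exists>k<n. c k \<noteq> 0" and cK: "\<forall>k\<in>{k. k < n \<and> d k \<ge> t}. c k = 0"
    and cg: "\<forall>l<m. (\<Sum>i<n. g l i * (\<Sum>k<n. c k * u k i)) = 0" by auto
  define x where "x = (\<lambda>i. \<Sum>k<n. c k * u k i)"
  have "t * Re (ipr n x x) \<le> Re (ipr n x (mvh n h x))" by (rule hyp, insert cg, auto simp: x_def)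
  hence le: "t * (\<Sum>k<n. (cmod (c k))^2 * dl k) \<le> (\<Sum>k<n. d k * ((cmod (c k))^2 * dl k))"
    unfolding x_def forms .
  have "(\<Sum>k<n. d k * ((cmod (c k))^2 * dl k)) < (\<Sum>k<n. t * ((cmod (c k))^2 * dl k))"
  proof (rule sum_strict_mono_ex1)
    show "\<forall>k\<in>{..<n}. d k * ((cmod (c k))^2 * dl k) \<le> t * ((cmod (c k))^2 * dl k)"
    proof
      fix k assume k: "k \<in> {..<n}"
      show "d k * ((cmod (c k))^2 * dl k) \<le> t * ((cmod (c k))^2 * dl k)"
      proof (cases "c k = 0")
        case False
        hence "d k < t" using cK k by force
        moreover have "(cmod (c k))^2 * dl k \<ge> 0" using dl_pos[of k] k by auto
        ultimately show ?thesis by (intro mult_right_mono, auto)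
      qed simp
    qed
    from c0 obtain k where k: "k < n" "c k \<noteq> 0" by auto
    hence "d k < t" using cK by force
    moreover have "(cmod (c k))^2 * dl k > 0" using dl_pos[of k] k by auto
    ultimately show "\<exists>k\<in>{..<n}. d k * ((cmod (c k))^2 * dl k) < t * ((cmod (c k))^2 * dl k)"
      using k by (intro bexI[of _ k] mult_strict_right_mono, auto)
  qed simp
  with le show False by (simp add: sum_distrib_left)
qed

lemma quad_upper:
  fixes g :: "nat \<Rightarrow> nat \<Rightarrow> complex"
  assumes card: "m + card {k. k < n \<and> d k \<le> t} < n"
    and hyp: "\<And>x. (\<forall>l<m. (\<Sum>i<n. g l i * x i) = 0) \<Longrightarrow> Re (ipr n x (mvh n h x)) \<le> t * Re (ipr n x x)"
  shows False
proof -
  from find_comb[of "{k. k < n \<and> d k \<le> t}" m g] card obtain c where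
    c0: "\<exists>k<n. c k \<noteq> 0" and cK: "\<forall>k\<in>{k. k < n \<and> d k \<le> t}. c k = 0"
    and cg: "\<forall>l<m. (\<Sum>i<n. g l i * (\<Sum>k<n. c k * u k i)) = 0" by auto
  define x where "x = (\<lambda>i. \<Sum>k<n. c k * u k i)"
  have "Re (ipr n x (mvh n h x)) \<le> t * Re (ipr n x x)" by (rule hyp, insert cg, auto simp: x_def)
  hence le: "(\<Sum>k<n. d k * ((cmod (c k))^2 * dl k)) \<le> t * (\<Sum>k<n. (cmod (c k))^2 * dl k)"
    unfolding x_def forms .
  have "(\<Sum>k<n. t * ((cmod (c k))^2 * dl k)) < (\<Sum>k<n. d k * ((cmod (c k))^2 * dl k))"
  proof (rule sum_strict_mono_ex1)
    show "\<forall>k\<in>{..<n}. t * ((cmod (c k))^2 * dl k) \<le> d k * ((cmod (c k))^2 * dl k)"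
    proof
      fix k assume k: "k \<in> {..<n}"
      show "t * ((cmod (c k))^2 * dl k) \<le> d k * ((cmod (c k))^2 * dl k)"
      proof (cases "c k = 0")
        case False
        hence "d k > t" using cK k by force
        moreover have "(cmod (c k))^2 * dl k \<ge> 0" using dl_pos[of k] k by auto
        ultimately show ?thesis by (intro mult_right_mono, auto)
      qed simp
    qed
    from c0 obtain k where k: "k < n" "c k \<noteq> 0" by auto
    hence "d k > t" using cK by force
    moreover have "(cmod (c k))^2 * dl k > 0" using dl_pos[of k] k by auto
    ultimately show "\<exists>k\<in>{..<n}. t * ((cmod (c k))^2 * dl k) < d k * ((cmod (c k))^2 * dl k)"
      using k by (intro bexI[of _ k] mult_strict_right_mono, auto)
  qed simp
  with le show False by (simp add: sum_distrib_left)
qed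

end



lemma rev_sort_nth_ge:
  fixes ys :: "real list"
  assumes i: "i < length ys" and cnt: "length (filter (\<lambda>y. y \<ge> c) ys) \<ge> i+1"
  shows "rev (sort ys) ! i \<ge> c"
proof (rule ccontr)
  define zs where "zs = sort ys"
  define n where "n = length ys"
  define j where "j = n - Suc i"
  have lz: "length zs = n" unfolding zs_def n_def by simp
  have sz: "sorted zs" unfolding zs_def by simp
  assume "\<not> rev (sort ys) ! i \<ge> c"
  hence zj: "zs ! j < c" unfolding zs_def j_def n_def using i by (simp add: rev_nth)
  have e1: "length (filter (\<lambda>y. y \<ge> c) zs) = length (filter (\<lambda>y. y \<ge> c) ys)"
    unfolding zs_def filter_sort by simp
  have e2: "length (filter (\<lambda>y. y \<ge> c) zs) = card {l. l < n \<and> zs ! l \<ge> c}"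
    unfolding length_filter_conv_card lz ..
  have "{l. l < n \<and> zs ! l \<ge> c} \<subseteq> {j+1..<n}"
  proof
    fix l assume l: "l \<in> {l. l < n \<and> zs ! l \<ge> c}"
    have "\<not> l \<le> j"
    proof
      assume "l \<le> j"
      hence "zs ! l \<le> zs ! j" using sorted_nth_mono[OF sz, of l j] lz i unfolding j_def n_def by auto
      with zj l show False by auto
    qed
    with l show "l \<in> {j+1..<n}" by auto
  qed
  hence "card {l. l < n \<and> zs ! l \<ge> c} \<le> card {j+1..<n}" by (intro card_mono, auto)
  hence "length (filter (\<lambda>y. y \<ge> c) ys) \<le> n - (j + 1)" using e1 e2 by simp
  with cnt i show False unfolding j_def n_def by auto
qed

lemma rev_sort_nth_le:
  fixes ys :: "real list"
  assumes i: "i < length ys" and cnt: "length (filter (\<lambda>y. y > c) ys) \<le> i"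
  shows "rev (sort ys) ! i \<le> c"
proof (rule ccontr)
  define zs where "zs = sort ys"
  define n where "n = length ys"
  define j where "j = n - Suc i"
  have lz: "length zs = n" unfolding zs_def n_def by simp
  have sz: "sorted zs" unfolding zs_def by simp
  assume "\<not> rev (sort ys) ! i \<le> c"
  hence zj: "zs ! j > c" unfolding zs_def j_def n_def using i by (simp add: rev_nth)
  have "{j..<n} \<subseteq> {l. l < n \<and> zs ! l > c}"
  proof
    fix l assume l: "l \<in> {j..<n}"
    hence "zs ! j \<le> zs ! l" using sorted_nth_mono[OF sz, of j l] lz by auto
    with zj l show "l \<in> {l. l < n \<and> zs ! l > c}" by auto
  qed
  hence "card {j..<n} \<le> card {l. l < n \<and> zs ! l > c}" by (intro card_mono, auto)
  also have "card {l. l < n \<and> zs ! l > c} = length (filter (\<lambda>y. y > c) zs)"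
    unfolding length_filter_conv_card lz ..
  also have "\<dots> = length (filter (\<lambda>y. y > c) ys)"
    unfolding zs_def filter_sort by simp
  finally have "n - j \<le> length (filter (\<lambda>y. y > c) ys)" by simp
  with cnt i show False unfolding j_def n_def by auto
qed

lemma filter_map_card: "length (filter P (map f [0..<n])) = card {k. k < n \<and> P (f k)}"
  unfolding length_filter_conv_card by (rule arg_cong[where f = card], auto)



lemma unit_sum: fixes n :: nat shows "p < n \<Longrightarrow> (\<Sum>i<n. (if i = p then 1 else 0) * x i) = (x p :: complex)"
proof -
  assume p: "p < n"
  have "(\<Sum>i<n. (if i = p then 1 else 0) * x i) = (\<Sum>i<n. if i = p then x i else 0)"
    by (rule sum.cong, auto)
  also have "\<dots> = x p" using p by simp
  finally show ?thesis .
qed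

theorem mainTheorem5:
  fixes chi :: nat and s :: "nat \<Rightarrow> real" and NR NL :: real
    and pR pL :: "nat \<Rightarrow> complex"
  assumes "chi \<ge> 3"
    and "\<And>a. 1 \<le> a \<Longrightarrow> a < chi \<Longrightarrow> s a \<ge> s (a+1)"
    and "s chi \<ge> 0"
  shows "\<forall>a\<in>{1..chi-2}. s a \<ge> sing_vals (Mmat chi s NR NL pR pL) ! (a+1)
           \<and> sing_vals (Mmat chi s NR NL pR pL) ! (a+1) \<ge> s (a+2)"
proof -
  note chi = assms(1)
  define n where "n = chi + 2"
  define A where "A = Mmat chi s NR NL pR pL"
  have A: "A \<in> carrier_mat n n" unfolding A_def Mmat_def n_def by auto
  have Aent: "A $$ (r,j) = (if r = 0 then (if j = 0 then complex_of_real NR else if j \<le> chi then pR j else 0)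
     else if r \<le> chi then (if j = r then complex_of_real (s r) else if j = chi+1 then pL r else 0)
     else (if j = chi+1 then complex_of_real NL else 0))" if "r < n" "j < n" for r j
    using that unfolding A_def Mmat_def n_def by auto
  define h where "h = (\<lambda>i j. (ctrans A * A) $$ (i,j))"
  from sing_vals_spectral[OF A] obtain u d where
    u: "\<forall>l<n. (\<exists>i<n. u l i \<noteq> 0) \<and> (\<forall>i<n. mvh n h (u l) i = of_real (d l) * u l i)"
    and orth: "\<forall>l<n. \<forall>l'<n. l \<noteq> l' \<longrightarrow> ipr n (u l) (u l') = 0"
    and sv: "sing_vals A = rev (sort (map (\<lambda>k. sqrt (d k)) [0..<n]))"
    unfolding h_def by blast
  interpret E: eigdata n h u d
    by (unfold_locales, insert u orth, auto)
  have smono: "s j \<le> s i" if "1 \<le> i" "i \<le> j" "j \<le> chi" for i j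
    using that
  proof (induction j)
    case 0 then show ?case by auto
  next
    case (Suc j)
    show ?case
    proof (cases "i = Suc j")
      case False
      hence "s j \<le> s i" using Suc by auto
      moreover have "s (Suc j) \<le> s j" using assms(2)[of j] Suc False by auto
      ultimately show ?thesis by auto
    qed simp
  qed
  have snn: "0 \<le> s j" if "1 \<le> j" "j \<le> chi" for j
    using smono[of j chi] that assms(3) by auto
  define Mx where "Mx x r = (\<Sum>j<n. A $$ (r,j) * x j)" for x r
  have qf: "Re (ipr n x (mvh n h x)) = (\<Sum>r<n. (cmod (Mx x r))^2)" for x
    unfolding h_def gram_form[OF A] Mx_def by simp
  have nf: "Re (ipr n x x) = (\<Sum>r<n. (cmod (x r))^2)" for x
    unfolding ipr_self by simp
  have Mx_mid: "Mx x r = of_real (s r) * x r" if x: "x (chi+1) = 0" and r: "1 \<le> r" "r \<le> chi" for x r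
  proof -
    have "Mx x r = (\<Sum>j<n. if j = r then of_real (s r) * x j else 0)"
      unfolding Mx_def
    proof (rule sum.cong[OF refl])
      fix j assume j: "j \<in> {..<n}"
      show "A $$ (r, j) * x j = (if j = r then complex_of_real (s r) * x j else 0)"
        using j r x by (subst Aent, auto simp: n_def)
    qed
    also have "\<dots> = of_real (s r) * x r" using r by (simp add: n_def)
    finally show ?thesis .
  qed
  have Mx_last: "Mx x (chi+1) = 0" if x: "x (chi+1) = 0" for x
    unfolding Mx_def by (rule sum.neutral, insert x, auto simp: Aent n_def)
  have cm: "(cmod (of_real (s r) * x r))^2 = (s r)^2 * (cmod (x r))^2" for x r
    by (simp add: norm_mult power_mult_distrib)
  show ?thesis
  proof (intro ballI conjI)
    fix a assume a: "a \<in> {1..chi-2}"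
    define ys where "ys = map (\<lambda>k. sqrt (d k)) [0..<n]"
    have i: "a + 1 < length ys" using a unfolding ys_def n_def by auto
    have svA: "sing_vals (Mmat chi s NR NL pR pL) = rev (sort ys)" using sv unfolding A_def ys_def .
    show "sing_vals (Mmat chi s NR NL pR pL) ! (a+1) \<le> s a"
      unfolding svA
    proof (rule rev_sort_nth_le[OF i])
      show "length (filter (\<lambda>y. y > s a) ys) \<le> a + 1"
      proof (rule ccontr)
        define t where "t = (s a)^2"
        assume "\<not> length (filter (\<lambda>y. y > s a) ys) \<le> a + 1"
        hence c1: "card {k. k < n \<and> sqrt (d k) > s a} \<ge> a + 2" unfolding ys_def filter_map_card by simp
        have sa: "0 \<le> s a" using snn[of a] a by auto
        have sub: "{k. k < n \<and> sqrt (d k) > s a} \<subseteq> {k. k < n \<and> d k > t}"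
        proof
          fix k assume k: "k \<in> {k. k < n \<and> sqrt (d k) > s a}"
          have "d k > t"
          proof (rule ccontr)
            assume "\<not> d k > t"
            hence "sqrt (d k) \<le> sqrt t" by auto
            also have "sqrt t = s a" unfolding t_def using sa by simp
            finally show False using k by auto
          qed
          with k show "k \<in> {k. k < n \<and> d k > t}" by auto
        qed
        have "card {k. k < n \<and> sqrt (d k) > s a} \<le> card {k. k < n \<and> d k > t}"
          by (rule card_mono[OF _ sub], auto)
        with c1 have c2: "card {k. k < n \<and> d k > t} \<ge> a + 2" by auto
        have "card {k. k < n \<and> d k \<le> t} + card {k. k < n \<and> d k > t} = card ({k. k < n \<and> d k \<le> t} \<union> {k. k < n \<and> d k > t})"
          by (rule card_Un_disjoint[symmetric], auto)
        also have "{k. k < n \<and> d k \<le> t} \<union> {k. k < n \<and> d k > t} = {..<n}" by auto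
        finally have "card {k. k < n \<and> d k \<le> t} + card {k. k < n \<and> d k > t} = n" by simp
        with c2 have cK: "(a + 1) + card {k. k < n \<and> d k \<le> t} < n" using a unfolding n_def by auto
        define g where "g l i = (if l = 0 then A $$ (0,i) else if i = (if l < a then l else chi+1) then 1 else 0)" for l i
        show False
        proof (rule E.quad_upper[OF cK, of g])
          fix x assume cons: "\<forall>l<a+1. (\<Sum>i<n. g l i * x i) = 0"
          have x_last: "x (chi+1) = 0"
          proof -
            have "(\<Sum>i<n. g a i * x i) = 0" using cons by auto
            moreover have "(\<Sum>i<n. g a i * x i) = x (chi+1)"
              unfolding g_def using a by (simp add: unit_sum n_def)
            ultimately show ?thesis by simp
          qed
          have x_low: "x l = 0" if l: "1 \<le> l" "l < a" for l
          proof -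
            have "(\<Sum>i<n. g l i * x i) = 0" using cons l by auto
            moreover have "(\<Sum>i<n. g l i * x i) = x l"
            proof -
              have "chi \<noteq> l" "Suc chi \<noteq> l" using l a chi by auto
              then show ?thesis unfolding g_def using l a chi by (simp add: unit_sum n_def)
            qed
            ultimately show ?thesis by simp
          qed
          have x_0: "Mx x 0 = 0" using cons unfolding g_def Mx_def by auto
          show "Re (ipr n x (mvh n h x)) \<le> t * Re (ipr n x x)"
            unfolding qf nf sum_distrib_left
          proof (rule sum_mono)
            fix r assume r: "r \<in> {..<n}"
            have t0: "0 \<le> t" unfolding t_def by simp
            show "(cmod (Mx x r))^2 \<le> t * (cmod (x r))^2"
            proof (cases "r = 0")
              case True then show ?thesis using x_0 t0 by simp
            next
              case False
              show ?thesis
              proof (cases "r = chi + 1")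
                case True then show ?thesis using Mx_last[of x, OF x_last] t0 by simp
              next
                case False2: False
                hence r1: "1 \<le> r" "r \<le> chi" using False r unfolding n_def by auto
                show ?thesis unfolding Mx_mid[of x, OF x_last r1] cm
                proof (cases "r < a")
                  case True then show "(s r)^2 * (cmod (x r))^2 \<le> t * (cmod (x r))^2"
                    using x_low[OF r1(1) True] by simp
                next
                  case False
                  hence "s r \<le> s a" using smono[of a r] a r1 by auto
                  hence "(s r)^2 \<le> t" unfolding t_def using snn[OF r1] by (intro power_mono, auto)
                  then show "(s r)^2 * (cmod (x r))^2 \<le> t * (cmod (x r))^2"
                    by (intro mult_right_mono, auto)
                qed
              qed
            qed
          qed
        qed
      qed
    qed
    show "s (a+2) \<le> sing_vals (Mmat chi s NR NL pR pL) ! (a+1)"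
      unfolding svA
    proof (rule rev_sort_nth_ge[OF i])
      show "a + 1 + 1 \<le> length (filter (\<lambda>y. y \<ge> s (a+2)) ys)"
      proof (rule ccontr)
        define t where "t = (s (a+2))^2"
        assume "\<not> a + 1 + 1 \<le> length (filter (\<lambda>y. y \<ge> s (a+2)) ys)"
        hence c1: "card {k. k < n \<and> sqrt (d k) \<ge> s (a+2)} \<le> a + 1" unfolding ys_def filter_map_card by simp
        have sa: "0 \<le> s (a+2)" using snn[of "a+2"] a chi by auto
        have sub: "{k. k < n \<and> d k \<ge> t} \<subseteq> {k. k < n \<and> sqrt (d k) \<ge> s (a+2)}"
          using real_le_rsqrt unfolding t_def by auto
        have "card {k. k < n \<and> d k \<ge> t} \<le> card {k. k < n \<and> sqrt (d k) \<ge> s (a+2)}"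
          by (rule card_mono[OF _ sub], auto)
        with c1 have cK: "(chi - a) + card {k. k < n \<and> d k \<ge> t} < n" using a unfolding n_def by auto
        define g :: "nat \<Rightarrow> nat \<Rightarrow> complex" where "g l i = (if i = (if l = 0 then 0 else a+2+l) then 1 else 0)" for l i
        show False
        proof (rule E.quad_lower[OF cK, of g])
          fix x assume cons: "\<forall>l<chi - a. (\<Sum>i<n. g l i * x i) = (0::complex)"
          have x_0: "x 0 = 0"
          proof -
            have "(\<Sum>i<n. g 0 i * x i) = 0" using cons a by auto
            moreover have "(\<Sum>i<n. g 0 i * x i) = x 0"
              unfolding g_def by (simp add: unit_sum n_def)
            ultimately show ?thesis by simp
          qed
          have x_high: "x j = 0" if j: "a + 3 \<le> j" "j \<le> chi + 1" for j
          proof -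
            define l where "l = j - (a + 2)"
            have l: "l \<noteq> 0" "l < chi - a" "a + 2 + l = j" using j unfolding l_def by auto
            have "(\<Sum>i<n. g l i * x i) = 0" using cons l by auto
            moreover have "(\<Sum>i<n. g l i * x i) = x j"
              unfolding g_def using l j by (simp add: unit_sum n_def)
            ultimately show ?thesis by simp
          qed
          have x_last: "x (chi+1) = 0" using x_high[of "chi+1"] a by auto
          show "t * Re (ipr n x x) \<le> Re (ipr n x (mvh n h x))"
            unfolding qf nf sum_distrib_left
          proof (rule sum_mono)
            fix r assume r: "r \<in> {..<n}"
            show "t * (cmod (x r))^2 \<le> (cmod (Mx x r))^2"
            proof (cases "r = 0")
              case True then show ?thesis using x_0 by simp
            next
              case False
              show ?thesis
              proof (cases "r = chi + 1")
                case True then show ?thesis using x_last by simp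
              next
                case False2: False
                hence r1: "1 \<le> r" "r \<le> chi" using False r unfolding n_def by auto
                show ?thesis unfolding Mx_mid[of x, OF x_last r1] cm
                proof (cases "r \<le> a + 2")
                  case False
                  then show "t * (cmod (x r))^2 \<le> (s r)^2 * (cmod (x r))^2"
                    using x_high[of r] r1 by simp
                next
                  case True
                  hence "s (a+2) \<le> s r" using smono[of r "a+2"] a r1 chi by auto
                  hence "t \<le> (s r)^2" unfolding t_def using sa by (intro power_mono, auto)
                  then show "t * (cmod (x r))^2 \<le> (s r)^2 * (cmod (x r))^2"
                    by (intro mult_right_mono, auto)
                qed
              qed
            qed
          qed
        qed
      qed
    qed
  qed
qed

end
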